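(* Let $M$ be a finite monoid and $k$ a field. Suppose there exist two irreducible elements $p,q\in M$ that are not associates. Define $f: M\to k[x,y]/\langle x^2,y^2,xy\rangle$ by $$f(m)=\begin{cases}1 & \text{if } m \text{ is a unit},\\ x & \text{if } m \text{ and } p \text{ are associates},\\ y & \text{if } m \text{ and } q \text{ are associates},\\ 0 & \text{otherwise}.\end{cases}$$ Then $f$ is a well-defined homomorphism of monoids (into the multiplicative monoid of the algebra), and it induces a surjective $k$-algebra homomorphism from the monoid algebra $kM$ onto $k[x,y]/\langle x^2,y^2,xy\rangle$.
   Context: A non-unit $p$ in a monoid $M$ is irreducible if whenever $p=ab$ with $a,b\in M$, then $a$ is a unit or $b$ is a unit. Two elements $a,b\in M$ are associates if there exist units $u,v\in M$ with $a=ubv$. $kM$ denotes the monoid algebra of $M$ over $k$. *)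

theory Defs
  imports Main
begin

definition munit :: "'m::monoid_mult \<Rightarrow> bool" where
  "munit u \<longleftrightarrow> (\<exists>v. u * v = 1 \<and> v * u = 1)"

definition mirreducible :: "'m::monoid_mult \<Rightarrow> bool" where
  "mirreducible p \<longleftrightarrow> \<not> munit p \<and> (\<forall>a b. p = a * b \<longrightarrow> munit a \<or> munit b)"

definition massoc :: "'m::monoid_mult \<Rightarrow> 'm \<Rightarrow> bool" where
  "massoc a b \<longleftrightarrow> (\<exists>u v. munit u \<and> munit v \<and> a = u * b * v)"

text \<open>A has k-basis 1, x, y; the triple (a,b,c) represents a + b x + c y.\<close>

type_synonym 'k Axy = "'k \<times> 'k \<times> 'k"

definition A_one :: "'k::field Axy" where "A_one = (1, 0, 0)"
definition A_x :: "'k::field Axy" where "A_x = (0, 1, 0)"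
definition A_y :: "'k::field Axy" where "A_y = (0, 0, 1)"
definition A_zero :: "'k::field Axy" where "A_zero = (0, 0, 0)"

definition A_add :: "'k::field Axy \<Rightarrow> 'k Axy \<Rightarrow> 'k Axy" where
  "A_add u w = (case u of (a, b, c) \<Rightarrow> case w of (a', b', c') \<Rightarrow> (a + a', b + b', c + c'))"

definition A_smult :: "'k::field \<Rightarrow> 'k Axy \<Rightarrow> 'k Axy" where
  "A_smult s u = (case u of (a, b, c) \<Rightarrow> (s * a, s * b, s * c))"

text \<open>(a + b x + c y)(a' + b' x + c' y) = aa' + (ab' + ba') x + (ac' + ca') y,
  since x^2 = y^2 = xy = 0.\<close>
definition A_mult :: "'k::field Axy \<Rightarrow> 'k Axy \<Rightarrow> 'k Axy" where
  "A_mult u w = (case u of (a, b, c) \<Rightarrow> case w of (a', b', c') \<Rightarrow>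
      (a * a', a * b' + b * a', a * c' + c * a'))"

text \<open>Since M is finite, kM is the space of all functions M \<Rightarrow> k with convolution.\<close>

definition MA_mult :: "('m::{monoid_mult,finite} \<Rightarrow> 'k::field) \<Rightarrow> ('m \<Rightarrow> 'k) \<Rightarrow> ('m \<Rightarrow> 'k)" where
  "MA_mult \<phi> \<psi> = (\<lambda>m. \<Sum>(a, b) \<in> {(a, b). a * b = m}. \<phi> a * \<psi> b)"

definition MA_one :: "'m::{monoid_mult,finite} \<Rightarrow> 'k::field" where
  "MA_one = (\<lambda>m. if m = 1 then 1 else 0)"

definition MA_basis :: "'m::{monoid_mult,finite} \<Rightarrow> 'm \<Rightarrow> 'k::field" where
  "MA_basis g = (\<lambda>m. if m = g then 1 else 0)"

definition fmap :: "'m::monoid_mult \<Rightarrow> 'm \<Rightarrow> 'm \<Rightarrow> 'k::field Axy" where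
  "fmap p q m = (if munit m then A_one else if massoc m p then A_x
                 else if massoc m q then A_y else A_zero)"

definition A_sum :: "('i \<Rightarrow> 'k::field Axy) \<Rightarrow> 'i set \<Rightarrow> 'k Axy" where
  "A_sum g I = ((\<Sum>i\<in>I. fst (g i)), (\<Sum>i\<in>I. fst (snd (g i))), (\<Sum>i\<in>I. snd (snd (g i))))"

definition Fmap :: "'m::{monoid_mult,finite} \<Rightarrow> 'm \<Rightarrow> ('m \<Rightarrow> 'k::field) \<Rightarrow> 'k Axy" where
  "Fmap p q \<phi> = A_sum (\<lambda>m. A_smult (\<phi> m) (fmap p q m)) UNIV"

end

theory Submission
  imports Defs
begin

lemma fin_inv:
  fixes a b :: "'m::{monoid_mult,finite}"
  assumes "a * b = 1" shows "b * a = 1"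
proof -
  have "surj (\<lambda>x. a * x)"
    by (metis assms mult.assoc mult_1_left surjI)
  then have "inj (\<lambda>x. a * x)" using finite_UNIV_surj_inj finite_UNIV by blast
  moreover have "a * (b * a) = a * 1" by (metis assms mult.assoc mult_1_left mult_1_right)
  ultimately show ?thesis by (meson injD)
qed

lemma munit_1: "munit (1::'m::monoid_mult)" unfolding munit_def by auto

lemma munit_mult: "munit (a::'m::monoid_mult) \<Longrightarrow> munit b \<Longrightarrow> munit (a*b)"
  unfolding munit_def
proof (elim exE conjE)
  fix v w assume h: "a * v = 1" "v * a = 1" "b * w = 1" "w * b = 1"
  show "\<exists>z. a * b * z = 1 \<and> z * (a * b) = 1"
    apply (rule exI[of _ "w*v"])
    by (metis h mult.assoc mult_1_left)
qed

lemma munit_inv: "munit (a::'m::monoid_mult) \<Longrightarrow> \<exists>v. munit v \<and> a * v = 1 \<and> v * a = 1"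
  unfolding munit_def by blast

lemma munit_prod:
  fixes a b :: "'m::{monoid_mult,finite}"
  assumes "munit (a*b)" shows "munit a" "munit b"
proof -
  obtain w where w: "a*b*w = 1" "w*(a*b) = 1" using assms unfolding munit_def by blast
  have "a*(b*w) = 1" using w by (simp add: mult.assoc)
  then have "(b*w)*a = 1" by (rule fin_inv)
  then show "munit a" unfolding munit_def using \<open>a*(b*w) = 1\<close> by blast
  have "(w*a)*b = 1" using w by (simp add: mult.assoc)
  then have "b*(w*a) = 1" by (rule fin_inv)
  then show "munit b" unfolding munit_def using \<open>(w*a)*b = 1\<close> by blast
qed

lemma massoc_refl: "massoc (a::'m::monoid_mult) a"
  unfolding massoc_def using munit_1 by (metis mult_1_left mult_1_right)

lemma massoc_sym: assumes "massoc (a::'m::monoid_mult) b" shows "massoc b a"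
proof -
  obtain u v where uv: "munit u" "munit v" "a = u*b*v" using assms unfolding massoc_def by blast
  obtain u' where u': "munit u'" "u*u' = 1" "u'*u = 1" using munit_inv[OF uv(1)] by blast
  obtain v' where v': "munit v'" "v*v' = 1" "v'*v = 1" using munit_inv[OF uv(2)] by blast
  have "b = u'*a*v'" using uv u' v' by (metis mult.assoc mult_1_left mult_1_right)
  then show ?thesis unfolding massoc_def using u' v' by blast
qed

lemma massoc_trans: assumes "massoc (a::'m::monoid_mult) b" "massoc b c" shows "massoc a c"
proof -
  obtain u v where uv: "munit u" "munit v" "a = u*b*v" using assms(1) unfolding massoc_def by blast
  obtain u1 v1 where uv1: "munit u1" "munit v1" "b = u1*c*v1" using assms(2) unfolding massoc_def by blast
  have "a = (u*u1)*c*(v1*v)" using uv uv1 by (simp add: mult.assoc)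
  then show ?thesis unfolding massoc_def using uv uv1 munit_mult by blast
qed

lemma massoc_unit: assumes "massoc (m::'m::monoid_mult) p" "munit m" shows "munit p"
proof -
  obtain u v where uv: "munit u" "munit v" "p = u*m*v" using massoc_sym[OF assms(1)] unfolding massoc_def by blast
  then show ?thesis using assms(2) munit_mult by metis
qed

lemma massoc_left: assumes "munit (a::'m::monoid_mult)" "massoc b p" shows "massoc (a*b) p"
proof -
  have "massoc (a*b) b" unfolding massoc_def using assms(1) munit_1 by (metis mult_1_right)
  then show ?thesis using massoc_trans assms(2) by blast
qed

lemma massoc_right: assumes "munit (a::'m::monoid_mult)" "massoc b p" shows "massoc (b*a) p"
proof -
  have "massoc (b*a) b" unfolding massoc_def using assms(1) munit_1 by (metis mult_1_left)
  then show ?thesis using massoc_trans assms(2) by blast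
qed

lemma massoc_left_iff: assumes "munit (a::'m::monoid_mult)" shows "massoc (a*b) p = massoc b p"
proof
  assume "massoc (a*b) p"
  obtain a' where a': "munit a'" "a*a' = 1" "a'*a = 1" using munit_inv[OF assms] by blast
  have "b = a'*(a*b)" using a' by (simp add: mult.assoc[symmetric])
  then show "massoc b p" using massoc_left[OF a'(1) \<open>massoc (a*b) p\<close>] by simp
qed (rule massoc_left[OF assms])

lemma massoc_right_iff: assumes "munit (a::'m::monoid_mult)" shows "massoc (b*a) p = massoc b p"
proof
  assume "massoc (b*a) p"
  obtain a' where a': "munit a'" "a*a' = 1" "a'*a = 1" using munit_inv[OF assms] by blast
  have "b = (b*a)*a'" using a' by (simp add: mult.assoc)
  then show "massoc b p" using massoc_right[OF a'(1) \<open>massoc (b*a) p\<close>] by simp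
qed (rule massoc_right[OF assms])

lemma massoc_nonunits:
  fixes a b p :: "'m::monoid_mult"
  assumes "mirreducible p" "\<not> munit a" "\<not> munit b"
  shows "\<not> massoc (a*b) p"
proof
  assume "massoc (a*b) p"
  then have "massoc p (a*b)" by (rule massoc_sym)
  then obtain u v where uv: "munit u" "munit v" "p = u*(a*b)*v" unfolding massoc_def by blast
  then have "p = (u*a)*(b*v)" by (simp add: mult.assoc)
  then have "munit (u*a) \<or> munit (b*v)" using assms(1) unfolding mirreducible_def by blast
  then show False
  proof
    assume "munit (u*a)"
    obtain u' where u': "munit u'" "u*u' = 1" "u'*u = 1" using munit_inv[OF uv(1)] by blast
    have "a = u'*(u*a)" using u' by (simp add: mult.assoc[symmetric])
    then show False using munit_mult[OF u'(1) \<open>munit (u*a)\<close>] assms(2) by simp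
  next
    assume "munit (b*v)"
    obtain v' where v': "munit v'" "v*v' = 1" "v'*v = 1" using munit_inv[OF uv(2)] by blast
    have "b = (b*v)*v'" using v' by (simp add: mult.assoc)
    then show False using munit_mult[OF \<open>munit (b*v)\<close> v'(1)] assms(3) by simp
  qed
qed

lemma fmap_mult:
  fixes p q :: "'m::{monoid_mult,finite}"
  assumes "mirreducible p" "mirreducible q"
  shows "(fmap p q (a * b) :: 'k::field Axy) = A_mult (fmap p q a) (fmap p q b)"
proof (cases "munit a")
  case True
  then show ?thesis
  proof (cases "munit b")
    case True
    have "munit (a*b)" using \<open>munit a\<close> True by (rule munit_mult)
    then show ?thesis using \<open>munit a\<close> True
      by (simp add: fmap_def A_mult_def A_one_def)
  next
    case False
    then have "\<not> munit (a*b)" using munit_prod(2) by blast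
    then show ?thesis using False True massoc_left_iff[OF True]
      by (simp add: fmap_def A_mult_def A_one_def A_x_def A_y_def A_zero_def)
  qed
next
  case False
  then have nu: "\<not> munit (a*b)" using munit_prod(1) by blast
  show ?thesis
  proof (cases "munit b")
    case True
    then show ?thesis using False nu massoc_right_iff[OF True]
      by (simp add: fmap_def A_mult_def A_one_def A_x_def A_y_def A_zero_def)
  next
    case False2: False
    have "\<not> massoc (a*b) p" "\<not> massoc (a*b) q"
      using massoc_nonunits assms False False2 by blast+
    then show ?thesis using False False2 nu
      by (simp add: fmap_def A_mult_def A_one_def A_x_def A_y_def A_zero_def)
  qed
qed

lemma Fmap_comps:
  "fst (Fmap p q \<phi>) = (\<Sum>m\<in>UNIV. \<phi> m * fst (fmap p q m))"
  "fst (snd (Fmap p q \<phi>)) = (\<Sum>m\<in>UNIV. \<phi> m * fst (snd (fmap p q m)))"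
  "snd (snd (Fmap p q \<phi>)) = (\<Sum>m\<in>UNIV. \<phi> m * snd (snd (fmap p q m)))"
  unfolding Fmap_def A_sum_def A_smult_def by (simp_all add: case_prod_beta)

lemma Axy_eq: "(u::'k Axy) = w \<longleftrightarrow> fst u = fst w \<and> fst (snd u) = fst (snd w) \<and> snd (snd u) = snd (snd w)"
  by (simp add: prod_eq_iff)

lemma conv_sum:
  fixes \<phi> \<psi> :: "'m::{monoid_mult,finite} \<Rightarrow> 'k::field"
  shows "(\<Sum>m\<in>UNIV. MA_mult \<phi> \<psi> m * h m) = (\<Sum>a\<in>UNIV. \<Sum>b\<in>UNIV. \<phi> a * \<psi> b * h (a*b))"
proof -
  have "(\<Sum>m\<in>UNIV. MA_mult \<phi> \<psi> m * h m)
      = (\<Sum>m\<in>UNIV. \<Sum>x\<in>{x \<in> UNIV. (\<lambda>(a,b). a*b) x = m}. (\<lambda>(a,b). \<phi> a * \<psi> b * h (a*b)) x)"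
    unfolding MA_mult_def sum_distrib_right
    by (intro sum.cong refl) (auto simp: case_prod_beta)
  also have "\<dots> = (\<Sum>x\<in>UNIV. (\<lambda>(a,b). \<phi> a * \<psi> b * h (a*b)) x)"
    by (rule sum.group) auto
  also have "\<dots> = (\<Sum>a\<in>UNIV. \<Sum>b\<in>UNIV. \<phi> a * \<psi> b * h (a*b))"
    by (subst sum.cartesian_product) (simp only: UNIV_Times_UNIV)
  finally show ?thesis .
qed

lemma bil1: fixes \<phi> \<psi> :: "'a \<Rightarrow> 'k::field"
  shows "(\<Sum>a\<in>A. \<Sum>b\<in>B. \<phi> a * \<psi> b * (f a * g b)) = (\<Sum>a\<in>A. \<phi> a * f a) * (\<Sum>b\<in>B. \<psi> b * g b)"
  by (simp add: sum_product mult_ac)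
lemma bil2: fixes \<phi> \<psi> :: "'a \<Rightarrow> 'k::field"
  shows "(\<Sum>a\<in>A. \<Sum>b\<in>B. \<phi> a * \<psi> b * (f a * g b + h a * k b)) = (\<Sum>a\<in>A. \<phi> a * f a) * (\<Sum>b\<in>B. \<psi> b * g b) + (\<Sum>a\<in>A. \<phi> a * h a) * (\<Sum>b\<in>B. \<psi> b * k b)"
  by (simp add: sum_product distrib_left sum.distrib mult_ac)

theorem lemma1:
  fixes p q :: "'m::{monoid_mult,finite}"
  assumes "mirreducible p" and "mirreducible q" and "\<not> massoc p q"
  shows "(\<forall>m. \<not> (munit m \<and> massoc m p) \<and> \<not> (munit m \<and> massoc m q)
                 \<and> \<not> (massoc m p \<and> massoc m q))
    \<and> (fmap p q 1 :: 'k::field Axy) = A_one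
    \<and> (\<forall>a b. (fmap p q (a * b) :: 'k Axy) = A_mult (fmap p q a) (fmap p q b))
    \<and> (\<forall>\<phi> \<psi> :: 'm \<Rightarrow> 'k. Fmap p q (\<lambda>m. \<phi> m + \<psi> m) = A_add (Fmap p q \<phi>) (Fmap p q \<psi>))
    \<and> (\<forall>(c::'k) (\<phi> :: 'm \<Rightarrow> 'k). Fmap p q (\<lambda>m. c * \<phi> m) = A_smult c (Fmap p q \<phi>))
    \<and> (\<forall>\<phi> \<psi> :: 'm \<Rightarrow> 'k. Fmap p q (MA_mult \<phi> \<psi>) = A_mult (Fmap p q \<phi>) (Fmap p q \<psi>))
    \<and> Fmap p q (MA_one :: 'm \<Rightarrow> 'k) = A_one
    \<and> (\<forall>g. Fmap p q (MA_basis g :: 'm \<Rightarrow> 'k) = fmap p q g)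
    \<and> surj (Fmap p q :: ('m \<Rightarrow> 'k) \<Rightarrow> 'k Axy)"
proof -
  have pnu: "\<not> munit p" and qnu: "\<not> munit q" using assms unfolding mirreducible_def by auto
  have P1: "\<forall>m. \<not> (munit m \<and> massoc m p) \<and> \<not> (munit m \<and> massoc m q)
                 \<and> \<not> (massoc m p \<and> massoc m q)"
  proof
    fix m
    show "\<not> (munit m \<and> massoc m p) \<and> \<not> (munit m \<and> massoc m q) \<and> \<not> (massoc m p \<and> massoc m q)"
    proof (intro conjI notI; elim conjE)
      assume "munit m" "massoc m p" then show False using massoc_unit[of m p] pnu by blast
    next
      assume "munit m" "massoc m q" then show False using massoc_unit[of m q] qnu by blast
    next
      assume a: "massoc m p" "massoc m q"
      have "massoc p q" using massoc_trans[OF massoc_sym[OF a(1)] a(2)] .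
      then show False using assms(3) by blast
    qed
  qed
  have P2: "(fmap p q 1 :: 'k::field Axy) = A_one" by (simp add: fmap_def munit_1)
  have P3: "\<forall>a b. (fmap p q (a * b) :: 'k Axy) = A_mult (fmap p q a) (fmap p q b)"
    using fmap_mult[OF assms(1,2)] by blast
  have P4: "\<forall>\<phi> \<psi> :: 'm \<Rightarrow> 'k. Fmap p q (\<lambda>m. \<phi> m + \<psi> m) = A_add (Fmap p q \<phi>) (Fmap p q \<psi>)"
    by (auto simp: Axy_eq Fmap_comps A_add_def split: prod.splits simp: sum.distrib distrib_right)
  have P5: "\<forall>(c::'k) (\<phi> :: 'm \<Rightarrow> 'k). Fmap p q (\<lambda>m. c * \<phi> m) = A_smult c (Fmap p q \<phi>)"
    by (auto simp: Axy_eq Fmap_comps A_smult_def split: prod.splits simp: sum_distrib_left mult.assoc)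
  have P6: "\<forall>\<phi> \<psi> :: 'm \<Rightarrow> 'k. Fmap p q (MA_mult \<phi> \<psi>) = A_mult (Fmap p q \<phi>) (Fmap p q \<psi>)"
  proof (intro allI)
    fix \<phi> \<psi> :: "'m \<Rightarrow> 'k"
    have c: "fst (fmap p q (a*b) :: 'k Axy) = fst (fmap p q a :: 'k Axy) * fst (fmap p q b :: 'k Axy)"
      "fst (snd (fmap p q (a*b) :: 'k Axy)) = fst (fmap p q a :: 'k Axy) * fst (snd (fmap p q b :: 'k Axy)) + fst (snd (fmap p q a :: 'k Axy)) * fst (fmap p q b :: 'k Axy)"
      "snd (snd (fmap p q (a*b) :: 'k Axy)) = fst (fmap p q a :: 'k Axy) * snd (snd (fmap p q b :: 'k Axy)) + snd (snd (fmap p q a :: 'k Axy)) * fst (fmap p q b :: 'k Axy)"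
      for a b using P3 by (auto simp: A_mult_def split: prod.splits)
    show "Fmap p q (MA_mult \<phi> \<psi>) = A_mult (Fmap p q \<phi>) (Fmap p q \<psi>)"
      unfolding Axy_eq Fmap_comps conv_sum c
      by (simp only: bil1 bil2) (simp add: A_mult_def case_prod_beta Fmap_comps)
  qed
  have P8: "\<forall>g. Fmap p q (MA_basis g :: 'm \<Rightarrow> 'k) = fmap p q g"
    unfolding Axy_eq Fmap_comps MA_basis_def by (simp add: if_distrib[of "\<lambda>c. c * _"] cong: if_cong)
  have P7: "Fmap p q (MA_one :: 'm \<Rightarrow> 'k) = A_one"
  proof -
    have "(MA_one :: 'm \<Rightarrow> 'k) = MA_basis 1" by (simp add: MA_one_def MA_basis_def)
    then show ?thesis using spec[OF P8, of 1] P2 by simp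
  qed
  have P9: "surj (Fmap p q :: ('m \<Rightarrow> 'k) \<Rightarrow> 'k Axy)"
    unfolding surj_def
  proof
    fix t :: "'k Axy"
    obtain a b c where t: "t = (a, b, c)" by (cases t) auto
    have fp: "(fmap p q p :: 'k Axy) = A_x" using pnu by (simp add: fmap_def massoc_refl)
    have fq: "(fmap p q q :: 'k Axy) = A_y" using qnu massoc_sym[of q p] assms(3)
      by (auto simp add: fmap_def massoc_refl)
    have d1: "p \<noteq> 1" using pnu by (auto simp: munit_1)
    have d2: "q \<noteq> 1" using qnu by (auto simp: munit_1)
    have d3: "p \<noteq> q" using assms(3) by (auto simp: massoc_refl)
    note d = d1 d2 d3
    let ?phi = "\<lambda>m. (if m = 1 then a else 0) + ((if m = p then b else 0) + (if m = q then c else 0))"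
    have "Fmap p q ?phi = t"
      unfolding Axy_eq Fmap_comps using d fp fq P2
      by (simp add: t distrib_right sum.distrib if_distrib[of "\<lambda>c. c * _"] A_x_def A_y_def A_one_def cong: if_cong)
    then show "\<exists>\<phi>. t = Fmap p q \<phi>" by (intro exI[of _ ?phi]) (rule sym)
  qed
  show ?thesis by (intro conjI P1 P2 P3 P4 P5 P6 P7 P8 P9)
qed

end
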